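(* Let $(\Omega,\mathcal{A},\mu)$ be a diffuse $\sigma$-finite measure space, let $p\in[1,\infty)$, let $u\in L_\infty(\mu)$, and let $M_u$ be the multiplication operator $M_uf:=uf$ on $L_p(\mu)$. Then \[ \|M_u+K\|\ge\|M_u\|=\|u\|_\infty\qquad\text{for all compact operators } K \text{ on } L_p(\mu), \] and consequently $\|M_u\|_{e}=\|u\|_\infty$, where $\|M_u\|_{e}:=\inf\{\|M_u+K\| : K \text{ a compact operator on } L_p(\mu)\}$.
   Context: $\mu$ is diffuse if every measurable $A$ with $\mu(A)>0$ contains a measurable $A'$ with $0<\mu(A')<\mu(A)$. *)

theory Defs
  imports "HOL-Analysis.Analysis" "HOL-Probability.Essential_Supremum"
begin

definition diffuse :: "'a measure \<Rightarrow> bool" where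
  "diffuse M \<longleftrightarrow> (\<forall>A\<in>sets M. emeasure M A > 0 \<longrightarrow>
      (\<exists>A'\<in>sets M. A' \<subseteq> A \<and> 0 < emeasure M A' \<and> emeasure M A' < emeasure M A))"

text \<open>Representatives of elements of L_p(mu); scalars are a normed field (real or complex).\<close>
definition Lp :: "'a measure \<Rightarrow> real \<Rightarrow> ('a \<Rightarrow> 'b::{real_normed_field,second_countable_topology}) set" where
  "Lp M p = {f. f \<in> borel_measurable M \<and> integrable M (\<lambda>x. norm (f x) powr p)}"

definition Lp_norm :: "'a measure \<Rightarrow> real \<Rightarrow> ('a \<Rightarrow> 'b::{real_normed_field,second_countable_topology}) \<Rightarrow> real" where
  "Lp_norm M p f = (\<integral>x. norm (f x) powr p \<partial>M) powr (1/p)"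

definition Linf_norm :: "'a measure \<Rightarrow> ('a \<Rightarrow> 'b::{real_normed_field,second_countable_topology}) \<Rightarrow> real" where
  "Linf_norm M u = real_of_ereal (esssup M (\<lambda>x. ereal (norm (u x))))"

definition Linf :: "'a measure \<Rightarrow> ('a \<Rightarrow> 'b::{real_normed_field,second_countable_topology}) set" where
  "Linf M = {u. u \<in> borel_measurable M \<and> esssup M (\<lambda>x. ereal (norm (u x))) < \<infinity>}"

text \<open>A bounded linear operator on L_p(mu), acting on representatives and
  compatible with a.e. equality (i.e. a well-defined operator on equivalence classes).\<close>
definition Lp_operator :: "'a measure \<Rightarrow> real \<Rightarrow>
    (('a \<Rightarrow> 'b::{real_normed_field,second_countable_topology}) \<Rightarrow> ('a \<Rightarrow> 'b)) \<Rightarrow> bool" where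
  "Lp_operator M p T \<longleftrightarrow>
     (\<forall>f\<in>Lp M p. T f \<in> Lp M p) \<and>
     (\<forall>f\<in>Lp M p. \<forall>g\<in>Lp M p. (AE x in M. f x = g x) \<longrightarrow> (AE x in M. T f x = T g x)) \<and>
     (\<forall>f\<in>Lp M p. \<forall>g\<in>Lp M p. \<forall>c.
        AE x in M. T (\<lambda>y. c * f y + g y) x = c * T f x + T g x) \<and>
     (\<exists>C. \<forall>f\<in>Lp M p. Lp_norm M p (T f) \<le> C * Lp_norm M p f)"

definition op_norm :: "'a measure \<Rightarrow> real \<Rightarrow>
    (('a \<Rightarrow> 'b::{real_normed_field,second_countable_topology}) \<Rightarrow> ('a \<Rightarrow> 'b)) \<Rightarrow> real" where
  "op_norm M p T = Sup ((\<lambda>f. Lp_norm M p (T f)) ` {f\<in>Lp M p. Lp_norm M p f \<le> 1})"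

definition compact_Lp_op :: "'a measure \<Rightarrow> real \<Rightarrow>
    (('a \<Rightarrow> 'b::{real_normed_field,second_countable_topology}) \<Rightarrow> ('a \<Rightarrow> 'b)) \<Rightarrow> bool" where
  "compact_Lp_op M p K \<longleftrightarrow> Lp_operator M p K \<and>
     (\<forall>f :: nat \<Rightarrow> ('a \<Rightarrow> 'b). (\<forall>n. f n \<in> Lp M p) \<longrightarrow> (\<exists>B. \<forall>n. Lp_norm M p (f n) \<le> B) \<longrightarrow>
        (\<exists>r g. strict_mono r \<and> g \<in> Lp M p \<and>
           (\<lambda>n. Lp_norm M p (\<lambda>x. K (f (r n)) x - g x)) \<longlonglongrightarrow> 0))"

definition mult_op :: "('a \<Rightarrow> 'b::real_normed_field) \<Rightarrow> ('a \<Rightarrow> 'b) \<Rightarrow> ('a \<Rightarrow> 'b)" where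
  "mult_op u f = (\<lambda>x. u x * f x)"

definition ess_norm_mult :: "'a measure \<Rightarrow> real \<Rightarrow> ('a \<Rightarrow> 'b::{real_normed_field,second_countable_topology}) \<Rightarrow> real" where
  "ess_norm_mult M p u =
     Inf ((\<lambda>K. op_norm M p (\<lambda>f x. mult_op u f x + K f x)) ` {K. compact_Lp_op M p K})"

end

theory Submission imports Defs begin

lemma pw_sum:
  fixes a b x p :: real
  assumes "0 \<le> a" "0 \<le> b" "0 \<le> x" "x \<le> a + b" "0 < p"
  shows "x powr p \<le> 2 powr p * (a powr p + b powr p)"
proof -
  have "x \<le> 2 * max a b" using assms by linarith
  hence "x powr p \<le> (2 * max a b) powr p" using assms by (intro powr_mono2) auto
  also have "\<dots> = 2 powr p * max a b powr p" using assms by (simp add: powr_mult)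
  also have "max a b powr p \<le> a powr p + b powr p"
    by (cases "a \<le> b") (auto simp: max_def)
  hence "2 powr p * max a b powr p \<le> 2 powr p * (a powr p + b powr p)"
    by (intro mult_left_mono) auto
  finally show ?thesis .
qed

lemma pw_rev:
  fixes a b c p d :: real
  assumes "0 \<le> a" "0 \<le> b" "0 \<le> c" "a \<le> b + c" "0 < p" "0 < d" "d < 1"
  shows "a powr p \<le> (1-d) powr (-p) * b powr p + d powr (-p) * c powr p"
proof (cases "c \<le> d * a")
  case True
  hence "(1-d) * a \<le> b" using assms by (simp add: algebra_simps)
  hence "((1-d) * a) powr p \<le> b powr p" using assms by (intro powr_mono2) auto
  hence "(1-d) powr p * a powr p \<le> b powr p" using assms by (simp add: powr_mult)
  hence "(1-d) powr (-p) * ((1-d) powr p * a powr p) \<le> (1-d) powr (-p) * b powr p"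
    by (intro mult_left_mono) auto
  hence "a powr p \<le> (1-d) powr (-p) * b powr p" using assms
    by (simp add: powr_minus field_simps)
  moreover have "0 \<le> d powr (-p) * c powr p" by simp
  ultimately show ?thesis by linarith
next
  case False
  hence "a \<le> c / d" using assms by (simp add: field_simps)
  hence "a powr p \<le> (c / d) powr p" using assms by (intro powr_mono2) auto
  also have "\<dots> = d powr (-p) * c powr p" using assms
    by (simp add: powr_divide powr_minus field_simps)
  finally have "a powr p \<le> d powr (-p) * c powr p" .
  moreover have "0 \<le> (1-d) powr (-p) * b powr p" by simp
  ultimately show ?thesis by linarith
qed


lemma Linf_AE:
  assumes "u \<in> Linf M"
  shows "AE x in M. norm (u x) \<le> Linf_norm M u"
proof -
  have e: "esssup M (\<lambda>x. ereal (norm (u x))) < \<infinity>" using assms by (simp add: Linf_def)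
  show ?thesis
    using esssup_AE[of "\<lambda>x. ereal (norm (u x))" M]
  proof (rule eventually_mono)
    fix x assume "ereal (norm (u x)) \<le> esssup M (\<lambda>x. ereal (norm (u x)))"
    with e show "norm (u x) \<le> Linf_norm M u" unfolding Linf_norm_def
      by (cases "esssup M (\<lambda>x. ereal (norm (u x)))") auto
  qed
qed

lemma Linf_nonneg:
  assumes "u \<in> Linf M"
  shows "0 \<le> Linf_norm M u"
proof -
  have "u \<in> borel_measurable M" using assms by (simp add: Linf_def)
  hence m: "(\<lambda>x. ereal (norm (u x))) \<in> borel_measurable M" by measurable
  show ?thesis
  proof (cases "emeasure M (space M) = 0")
    case True
    then show ?thesis using esssup_zero_space[OF True m] by (simp add: Linf_norm_def)
  next
    case False
    have "esssup M (\<lambda>x. 0::ereal) \<le> esssup M (\<lambda>x. ereal (norm (u x)))"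
      by (rule esssup_mono) (use m in auto)
    hence "0 \<le> esssup M (\<lambda>x. ereal (norm (u x)))" using esssup_const[OF False, of "0::ereal"] by simp
    then show ?thesis unfolding Linf_norm_def by (simp add: real_of_ereal_pos)
  qed
qed

lemma Linf_pos:
  assumes "u \<in> Linf M" "0 \<le> c" "c < Linf_norm M u"
  shows "emeasure M {x\<in>space M. c < norm (u x)} > 0"
proof (rule ccontr)
  assume "\<not> ?thesis"
  hence z: "emeasure M {x\<in>space M. c < norm (u x)} = 0" by (simp add: zero_less_iff_neq_zero)
  have um: "u \<in> borel_measurable M" using assms by (simp add: Linf_def)
  have "{x\<in>space M. c < norm (u x)} \<in> sets M" using um by measurable
  hence "AE x in M. norm (u x) \<le> c" using z
    by (intro AE_I'[of "{x\<in>space M. c < norm (u x)}"]) auto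
  hence "AE x in M. ereal (norm (u x)) \<le> ereal c" by auto
  hence "esssup M (\<lambda>x. ereal (norm (u x))) \<le> ereal c" using um
    by (intro esssup_I) auto
  hence "Linf_norm M u \<le> c" unfolding Linf_norm_def using assms(2)
    by (cases "esssup M (\<lambda>x. ereal (norm (u x)))") auto
  with assms show False by simp
qed

definition NN :: "'a measure \<Rightarrow> real \<Rightarrow> ('a \<Rightarrow> 'b::{real_normed_field,second_countable_topology}) \<Rightarrow> real" where
  "NN M p f = (\<integral>x. norm (f x) powr p \<partial>M)"

lemma NN_nonneg: "0 \<le> NN M p f"
  unfolding NN_def by (intro integral_nonneg_AE) auto

lemma Lp_norm_NN: "Lp_norm M p f = NN M p f powr (1/p)"
  by (simp add: Lp_norm_def NN_def)

lemma NN_Lp_norm: "0 < p \<Longrightarrow> NN M p f = Lp_norm M p f powr p"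
  using NN_nonneg[of M p f] by (simp add: Lp_norm_NN powr_powr)

lemma Lp_bound:
  fixes f g :: "'a \<Rightarrow> 'b::{real_normed_field,second_countable_topology}"
  assumes "f \<in> Lp M p" "g \<in> borel_measurable M" "0 \<le> C"
    "AE x in M. norm (g x) powr p \<le> C * norm (f x) powr p"
  shows "g \<in> Lp M p" "NN M p g \<le> C * NN M p f"
proof -
  have i: "integrable M (\<lambda>x. C * norm (f x) powr p)" using assms by (simp add: Lp_def)
  have "integrable M (\<lambda>x. norm (g x) powr p)"
    apply (rule Bochner_Integration.integrable_bound[OF i])
    using assms(2) apply measurable
    using assms(3,4) by (auto elim!: eventually_mono intro: order_trans)
  thus "g \<in> Lp M p" using assms by (simp add: Lp_def)
  have "NN M p g \<le> (\<integral>x. C * norm (f x) powr p \<partial>M)" unfolding NN_def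
    using assms(3,4) by (intro integral_mono_AE' i) auto
  thus "NN M p g \<le> C * NN M p f" by (simp add: NN_def)
qed

lemma Lp_bound2:
  fixes f g h :: "'a \<Rightarrow> 'b::{real_normed_field,second_countable_topology}"
  assumes "f \<in> Lp M p" "g \<in> Lp M p" "h \<in> borel_measurable M" "0 < p"
    "AE x in M. norm (h x) \<le> norm (f x) + norm (g x)"
  shows "h \<in> Lp M p" "NN M p h \<le> 2 powr p * (NN M p f + NN M p g)"
proof -
  have i: "integrable M (\<lambda>x. 2 powr p * (norm (f x) powr p + norm (g x) powr p))"
    using assms by (simp add: Lp_def)
  have ae: "AE x in M. norm (h x) powr p \<le> 2 powr p * (norm (f x) powr p + norm (g x) powr p)"
    using assms(5) by (rule eventually_mono) (intro pw_sum, auto simp: assms(4))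
  have "integrable M (\<lambda>x. norm (h x) powr p)"
    apply (rule Bochner_Integration.integrable_bound[OF i])
    using assms(3) apply measurable
    using ae by (auto elim!: eventually_mono intro: order_trans)
  thus "h \<in> Lp M p" using assms by (simp add: Lp_def)
  have "NN M p h \<le> (\<integral>x. 2 powr p * (norm (f x) powr p + norm (g x) powr p) \<partial>M)" unfolding NN_def
    using ae by (intro integral_mono_AE' i) auto
  also have "\<dots> = 2 powr p * (NN M p f + NN M p g)" unfolding NN_def
    using assms by (simp add: Lp_def)
  finally show "NN M p h \<le> 2 powr p * (NN M p f + NN M p g)" .
qed

lemma Lp_cong:
  fixes f g :: "'a \<Rightarrow> 'b::{real_normed_field,second_countable_topology}"
  assumes "f \<in> Lp M p" "g \<in> borel_measurable M" "AE x in M. f x = g x"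
  shows "g \<in> Lp M p" "NN M p g = NN M p f"
proof -
  have ae: "AE x in M. norm (f x) powr p = norm (g x) powr p" using assms(3) by auto
  have "integrable M (\<lambda>x. norm (g x) powr p)"
    using assms(1) ae unfolding Lp_def
    by (subst integrable_cong_AE[symmetric]) (use assms(2) in \<open>auto intro: borel_measurable_norm\<close>)
  thus "g \<in> Lp M p" using assms by (simp add: Lp_def)
  show "NN M p g = NN M p f" unfolding NN_def using ae
    by (intro integral_cong_AE) (use assms in \<open>auto simp: Lp_def\<close>)
qed

lemma Lp_mult:
  fixes f u :: "'a \<Rightarrow> 'b::{real_normed_field,second_countable_topology}"
  assumes "u \<in> Linf M" "f \<in> Lp M p" "0 < p"
  shows "mult_op u f \<in> Lp M p" "NN M p (mult_op u f) \<le> Linf_norm M u powr p * NN M p f"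
proof -
  have um: "u \<in> borel_measurable M" using assms by (simp add: Linf_def)
  have fm: "f \<in> borel_measurable M" using assms by (simp add: Lp_def)
  have L: "0 \<le> Linf_norm M u" using Linf_nonneg[OF assms(1)] .
  have ae: "AE x in M. norm (mult_op u f x) powr p \<le> Linf_norm M u powr p * norm (f x) powr p"
    using Linf_AE[OF assms(1)]
  proof (rule eventually_mono)
    fix x assume "norm (u x) \<le> Linf_norm M u"
    hence "norm (u x) * norm (f x) \<le> Linf_norm M u * norm (f x)" by (intro mult_right_mono) auto
    hence "(norm (u x) * norm (f x)) powr p \<le> (Linf_norm M u * norm (f x)) powr p"
      using assms(3) by (intro powr_mono2) auto
    thus "norm (mult_op u f x) powr p \<le> Linf_norm M u powr p * norm (f x) powr p"
      using L by (simp add: mult_op_def norm_mult powr_mult)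
  qed
  have m: "mult_op u f \<in> borel_measurable M" unfolding mult_op_def using um fm by measurable
  show "mult_op u f \<in> Lp M p" "NN M p (mult_op u f) \<le> Linf_norm M u powr p * NN M p f"
    using Lp_bound[OF assms(2) m _ ae] by auto
qed


lemma diffuse_split:
  assumes "diffuse M" "S \<in> sets M" "0 < emeasure M S" "emeasure M S < \<infinity>"
  shows "\<exists>Q. Q \<in> sets M \<and> Q \<subseteq> S \<and> 0 < emeasure M Q \<and>
     (S - Q \<in> sets M \<and> 0 < emeasure M (S - Q) \<and> emeasure M (S - Q) < \<infinity>)"
proof -
  obtain A where A: "A \<in> sets M" "A \<subseteq> S" "0 < emeasure M A" "emeasure M A < emeasure M S"
    using assms unfolding diffuse_def by blast
  have D: "S - A \<in> sets M" using A assms by auto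
  have "0 < emeasure M (S - A)"
  proof (rule ccontr)
    assume "\<not> ?thesis"
    hence "S - A \<in> null_sets M" using D by (auto simp: null_sets_def zero_less_iff_neq_zero)
    hence "emeasure M (A \<union> (S - A)) = emeasure M A" by (rule emeasure_Un_null_set[OF A(1)])
    moreover have "A \<union> (S - A) = S" using A by auto
    ultimately show False using A by simp
  qed
  moreover have "emeasure M (S - A) < \<infinity>"
    using emeasure_mono[of "S - A" S M] assms D by auto
  ultimately show ?thesis using A D by blast
qed

lemma diffuse_seq:
  assumes "diffuse M" "B \<in> sets M" "0 < emeasure M B" "emeasure M B < \<infinity>"
  obtains P :: "nat \<Rightarrow> 'a set" where "\<And>n. P n \<in> sets M" "\<And>n. P n \<subseteq> B"
    "\<And>n. 0 < emeasure M (P n)" "\<And>n. emeasure M (P n) < \<infinity>" "disjoint_family P"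
proof -
  define good where "good S \<longleftrightarrow> S \<in> sets M \<and> 0 < emeasure M S \<and> emeasure M S < \<infinity>" for S
  define step where "step S = (SOME Q. Q \<in> sets M \<and> Q \<subseteq> S \<and> 0 < emeasure M Q \<and> good (S - Q))" for S
  have st: "step S \<in> sets M \<and> step S \<subseteq> S \<and> 0 < emeasure M (step S) \<and> good (S - step S)"
    if "good S" for S
    unfolding step_def
    by (rule someI_ex) (use diffuse_split[OF assms(1)] that in \<open>auto simp: good_def\<close>)
  define Sq where "Sq = rec_nat B (\<lambda>_ S. S - step S)"
  have Sq0: "Sq 0 = B" and SqS: "\<And>n. Sq (Suc n) = Sq n - step (Sq n)" by (simp_all add: Sq_def)
  have g: "good (Sq n)" for n
    by (induction n) (use assms st in \<open>auto simp: Sq0 SqS good_def\<close>)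
  have anti: "Sq m \<subseteq> Sq n" if "n \<le> m" for n m
    using that by (induction m rule: dec_induct) (auto simp: SqS)
  define P where "P n = step (Sq n)" for n
  show ?thesis
  proof
    fix n
    show "P n \<in> sets M" "0 < emeasure M (P n)" using st[OF g[of n]] by (auto simp: P_def)
    show "P n \<subseteq> B" using st[OF g[of n]] anti[of 0 n] by (auto simp: P_def Sq0)
    show "emeasure M (P n) < \<infinity>"
      using st[OF g[of n]] g[of n] emeasure_mono[of "P n" "Sq n" M] by (auto simp: P_def good_def)
  next
    show "disjoint_family P"
      unfolding disjoint_family_on_def
    proof (intro ballI impI)
      fix m n :: nat assume "m \<noteq> n"
      have *: "P a \<inter> P b = {}" if "a < b" for a b
      proof -
        have "P b \<subseteq> Sq b" using st[OF g[of b]] by (auto simp: P_def)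
        also have "\<dots> \<subseteq> Sq (Suc a)" using anti that by auto
        finally show ?thesis by (auto simp: SqS P_def)
      qed
      show "P m \<inter> P n = {}" using *[of m n] *[of n m] \<open>m \<noteq> n\<close> by (cases "m < n") auto
    qed
  qed
qed


lemma good_set:
  assumes "sigma_finite_measure M" "u \<in> Linf M" "0 \<le> c" "c < Linf_norm M u"
  shows "\<exists>B\<in>sets M. B \<subseteq> {x\<in>space M. c < norm (u x)} \<and> 0 < emeasure M B \<and> emeasure M B < \<infinity>"
proof -
  obtain A :: "nat \<Rightarrow> 'a set" where A: "range A \<subseteq> sets M" "(\<Union>i. A i) = space M"
    "\<And>i. emeasure M (A i) \<noteq> \<infinity>"
    using sigma_finite_measure.sigma_finite[OF assms(1)] by metis
  define E where "E = {x\<in>space M. c < norm (u x)}"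
  have um: "u \<in> borel_measurable M" using assms by (simp add: Linf_def)
  have E: "E \<in> sets M" unfolding E_def using um by measurable
  have EU: "E = (\<Union>i. E \<inter> A i)" using A(2) E_def by auto
  have "\<exists>i. emeasure M (E \<inter> A i) \<noteq> 0"
  proof (rule ccontr)
    assume "\<not> ?thesis"
    hence "emeasure M (\<Union>i. E \<inter> A i) = 0" using A E by (intro emeasure_UN_eq_0) auto
    hence "emeasure M E = 0" using EU by simp
    with Linf_pos[OF assms(2,3,4)] show False by (simp add: E_def)
  qed
  then obtain i where i: "emeasure M (E \<inter> A i) \<noteq> 0" by blast
  have s: "E \<inter> A i \<in> sets M" using A E by auto
  have "emeasure M (E \<inter> A i) \<le> emeasure M (A i)" using A by (intro emeasure_mono) auto
  hence "emeasure M (E \<inter> A i) < \<infinity>" using A(3)[of i] by (simp add: less_top order_le_less_trans)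
  thus ?thesis using s i by (intro bexI[of _ "E \<inter> A i"]) (auto simp: E_def zero_less_iff_neq_zero)
qed

lemma Lp_zero: "0 < p \<Longrightarrow> (\<lambda>x. 0) \<in> Lp M p \<and> Lp_norm M p (\<lambda>x. 0) = 0"
  by (simp add: Lp_def Lp_norm_def)

lemma op_bdd:
  fixes u :: "'a \<Rightarrow> 'b::{real_normed_field,second_countable_topology}"
  assumes "u \<in> Linf M" "Lp_operator M p K" "1 \<le> p"
  shows "bdd_above ((\<lambda>f. Lp_norm M p (\<lambda>x. mult_op u f x + K f x)) ` {f\<in>Lp M p. Lp_norm M p f \<le> 1})"
proof -
  obtain C where C: "\<And>f. f \<in> Lp M p \<Longrightarrow> Lp_norm M p (K f) \<le> C * Lp_norm M p f"
    using assms(2) unfolding Lp_operator_def by blast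
  have KL: "\<And>f. f \<in> Lp M p \<Longrightarrow> K f \<in> Lp M p" using assms(2) unfolding Lp_operator_def by blast
  have p: "0 < p" using assms by simp
  define L where "L = Linf_norm M u"
  define B where "B = (2 powr p * (L powr p + \<bar>C\<bar> powr p)) powr (1/p)"
  show ?thesis unfolding bdd_above_def
  proof (intro exI[of _ B] ballI)
    fix y assume "y \<in> (\<lambda>f. Lp_norm M p (\<lambda>x. mult_op u f x + K f x)) ` {f\<in>Lp M p. Lp_norm M p f \<le> 1}"
    then obtain f where f: "f \<in> Lp M p" "Lp_norm M p f \<le> 1"
      and y: "y = Lp_norm M p (\<lambda>x. mult_op u f x + K f x)" by auto
    have n0: "0 \<le> Lp_norm M p f" by (simp add: Lp_norm_def)
    have Nf: "NN M p f \<le> 1" using NN_Lp_norm[OF p, of M f] f n0 p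
      powr_mono2[of p "Lp_norm M p f" 1] by simp
    have m1: "mult_op u f \<in> Lp M p" and N1: "NN M p (mult_op u f) \<le> L powr p * NN M p f"
      using Lp_mult[OF assms(1) f(1) p] by (auto simp: L_def)
    have N1': "NN M p (mult_op u f) \<le> L powr p" using N1 Nf
      by (metis mult_left_le order_trans powr_ge_zero NN_nonneg)
    have "Lp_norm M p (K f) \<le> \<bar>C\<bar>"
    proof -
      have "C * Lp_norm M p f \<le> \<bar>C\<bar> * 1" using f n0
      proof -
        have "C * Lp_norm M p f \<le> \<bar>C\<bar> * Lp_norm M p f" using n0 by (intro mult_right_mono) auto
        also have "\<dots> \<le> \<bar>C\<bar> * 1" using f(2) by (intro mult_left_mono) auto
        finally show ?thesis .
      qed
      thus ?thesis using C[OF f(1)] by simp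
    qed
    hence "Lp_norm M p (K f) powr p \<le> \<bar>C\<bar> powr p"
      using p by (intro powr_mono2) (auto simp: Lp_norm_def)
    hence N2: "NN M p (K f) \<le> \<bar>C\<bar> powr p" using NN_Lp_norm[OF p, of M "K f"] by simp
    have meas: "(\<lambda>x. mult_op u f x + K f x) \<in> borel_measurable M"
      using m1 KL[OF f(1)] by (auto simp: Lp_def)
    have "NN M p (\<lambda>x. mult_op u f x + K f x) \<le> 2 powr p * (NN M p (mult_op u f) + NN M p (K f))"
      using Lp_bound2[OF m1 KL[OF f(1)] meas p] by (auto intro: norm_triangle_ineq)
    also have "\<dots> \<le> 2 powr p * (L powr p + \<bar>C\<bar> powr p)"
      using N1' N2 by (intro mult_left_mono) auto
    finally have "NN M p (\<lambda>x. mult_op u f x + K f x) powr (1/p) \<le> B"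
      unfolding B_def using p by (intro powr_mono2) (auto simp: NN_nonneg)
    thus "y \<le> B" using y by (simp add: Lp_norm_NN)
  qed
qed


lemma Lp_norm_nonneg: "0 \<le> Lp_norm M p f"
  by (simp add: Lp_norm_def)

lemma key_lower:
  fixes u :: "'a \<Rightarrow> 'b::{real_normed_field,second_countable_topology}"
  assumes sf: "sigma_finite_measure M" and dif: "diffuse M" and p1: "1 \<le> p"
    and uL: "u \<in> Linf M" and Kc: "compact_Lp_op M p K"
    and t0: "0 < t" and tL: "t < Linf_norm M u"
  shows "t \<le> op_norm M p (\<lambda>f x. mult_op u f x + K f x)"
proof -
  have p: "0 < p" using p1 by simp
  have Kop: "Lp_operator M p K" using Kc by (simp add: compact_Lp_op_def)
  have KL: "\<And>f. f \<in> Lp M p \<Longrightarrow> K f \<in> Lp M p" using Kop unfolding Lp_operator_def by blast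
  have Klin: "\<And>f g c. f \<in> Lp M p \<Longrightarrow> g \<in> Lp M p \<Longrightarrow>
      AE x in M. K (\<lambda>y. c * f y + g y) x = c * K f x + K g x"
    using Kop unfolding Lp_operator_def by blast
  have bdd: "bdd_above ((\<lambda>f. Lp_norm M p (\<lambda>x. mult_op u f x + K f x)) ` {f\<in>Lp M p. Lp_norm M p f \<le> 1})"
    by (rule op_bdd[OF uL Kop p1])
  define L where "L = Linf_norm M u"
  define c where "c = (t + L) / 2"
  have c: "t < c" "c < L" "0 < c" using tL t0 by (auto simp: c_def L_def)
  define d where "d = (c - t) / (2 * c)"
  have d: "0 < d" "d < 1" "t < (1 - d) * c" using c t0 by (auto simp: d_def field_simps)
  obtain B where B: "B \<in> sets M" "B \<subseteq> {x\<in>space M. c < norm (u x)}" "0 < emeasure M B" "emeasure M B < \<infinity>"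
    using good_set[OF sf uL, of c] c by (auto simp: L_def)
  obtain P :: "nat \<Rightarrow> 'a set" where P: "\<And>n. P n \<in> sets M" "\<And>n. P n \<subseteq> B"
    "\<And>n. 0 < emeasure M (P n)" "\<And>n. emeasure M (P n) < \<infinity>" "disjoint_family P"
    using diffuse_seq[OF dif B(1,3,4)] by metis
  have mP: "0 < measure M (P n)" for n using P(3,4)[of n] by (simp add: measure_def enn2real_positive_iff)
  define k where "k n = 1 / (2 * measure M (P n))" for n
  have k: "0 < k n" for n using mP[of n] by (simp add: k_def)
  define f where "f n x = (if x \<in> P n then (of_real (k n powr (1/p)) :: 'b) else 0)" for n x
  have fpow: "norm (f n x) powr p = indicator (P n) x * k n" for n x
  proof (cases "x \<in> P n")
    case True
    then show ?thesis using k[of n] p by (simp add: f_def powr_powr)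
  next
    case False
    then show ?thesis using p by (simp add: f_def)
  qed
  have fm: "f n \<in> borel_measurable M" for n
    unfolding f_def[abs_def] by (rule measurable_If_set) (use P(1)[of n] in auto)
  have fint: "integrable M (\<lambda>x. norm (f n x) powr p)" for n
    unfolding fpow using P(1,4)[of n] by (intro integrable_mult_left) auto
  have fLp: "f n \<in> Lp M p" for n using fm fint by (simp add: Lp_def)
  have fN: "NN M p (f n) = 1/2" for n
  proof -
    have "NN M p (f n) = measure M (P n) * k n"
      unfolding NN_def fpow using P(1)[of n] sets.sets_into_space[OF P(1)[of n]]
      by (simp add: Int_absorb2)
    thus ?thesis using mP[of n] by (simp add: k_def)
  qed
  have fb: "Lp_norm M p (f n) \<le> 1" for n
    unfolding Lp_norm_NN fN using p powr_mono2[of "1/p" "1/2" 1] by simp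
  obtain r g where r: "strict_mono r" and gL: "g \<in> Lp M p"
    and lim: "(\<lambda>n. Lp_norm M p (\<lambda>x. K (f (r n)) x - g x)) \<longlonglongrightarrow> 0"
    using Kc fLp fb unfolding compact_Lp_op_def by blast
  define e where "e n = NN M p (\<lambda>x. K (f (r n)) x - g x)" for n
  have dLp: "(\<lambda>x. K (f (r n)) x - g x) \<in> Lp M p" for n
  proof -
    have m1: "K (f (r n)) \<in> borel_measurable M" "g \<in> borel_measurable M"
      using KL[OF fLp[of "r n"]] gL by (auto simp: Lp_def)
    have m: "(\<lambda>x. K (f (r n)) x - g x) \<in> borel_measurable M" using m1 by measurable
    show ?thesis by (rule Lp_bound2(1)[OF KL[OF fLp[of "r n"]] gL m p]) (simp add: norm_triangle_ineq4)
  qed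
  have e0: "e \<longlonglongrightarrow> 0"
  proof -
    have "(\<lambda>n. Lp_norm M p (\<lambda>x. K (f (r n)) x - g x) powr p) \<longlonglongrightarrow> 0"
      by (rule tendsto_zero_powrI[OF lim tendsto_const]) (use p in \<open>auto simp: Lp_norm_nonneg\<close>)
    thus ?thesis unfolding e_def by (simp only: NN_Lp_norm[OF p])
  qed
  define h where "h n = (\<lambda>y. (-1) * f (r (Suc n)) y + f (r n) y)" for n
  have rne: "r n \<noteq> r (Suc n)" for n using strict_monoD[OF r, of n "Suc n"] by simp
  have dis: "P (r n) \<inter> P (r (Suc n)) = {}" for n
    using P(5) rne[of n] by (auto simp: disjoint_family_on_def)
  have hpow: "norm (h n y) powr p = indicator (P (r n)) y * k (r n) + indicator (P (r (Suc n))) y * k (r (Suc n))" for n y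
  proof -
    consider "y \<in> P (r n)" | "y \<in> P (r (Suc n))" | "y \<notin> P (r n)" "y \<notin> P (r (Suc n))" by blast
    then show ?thesis
    proof cases
      case 1
      hence "y \<notin> P (r (Suc n))" using dis[of n] by blast
      hence "h n y = f (r n) y" using 1 by (simp add: h_def f_def)
      then show ?thesis using fpow[of "r n" y] 1 \<open>y \<notin> P (r (Suc n))\<close> by simp
    next
      case 2
      hence "y \<notin> P (r n)" using dis[of n] by blast
      hence "h n y = - f (r (Suc n)) y" using 2 by (simp add: h_def f_def)
      then show ?thesis using fpow[of "r (Suc n)" y] 2 \<open>y \<notin> P (r n)\<close> by simp
    next
      case 3
      then show ?thesis using p by (simp add: h_def f_def)
    qed
  qed
  have hm: "h n \<in> borel_measurable M" for n unfolding h_def using fm by measurable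
  have iP: "integrable M (\<lambda>x. indicator (P m) x * k m)" for m
    using P(1,4)[of m] by (intro integrable_mult_left) auto
  have hint: "integrable M (\<lambda>x. norm (h n x) powr p)" for n
    unfolding hpow by (rule Bochner_Integration.integrable_add[OF iP iP])
  have hLp: "h n \<in> Lp M p" for n using hm hint by (simp add: Lp_def)
  have hN: "NN M p (h n) = 1" for n
  proof -
    have i: "integrable M (\<lambda>x. indicator (P m) x * k m)" for m
      using P(1,4) by (intro integrable_mult_left) auto
    have "NN M p (h n) = measure M (P (r n)) * k (r n) + measure M (P (r (Suc n))) * k (r (Suc n))"
      unfolding NN_def hpow using sets.sets_into_space[OF P(1)]
      by (simp add: Bochner_Integration.integral_add[OF i i] Int_absorb2)
    thus ?thesis using mP[of "r n"] mP[of "r (Suc n)"] by (simp add: k_def)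
  qed
  have uhLp: "mult_op u (h n) \<in> Lp M p" for n using Lp_mult(1)[OF uL hLp p] .
  have Nuh: "c powr p \<le> NN M p (mult_op u (h n))" for n
  proof -
    have "c powr p = (\<integral>x. c powr p * norm (h n x) powr p \<partial>M)"
      using hN[of n] by (simp add: NN_def)
    also have "\<dots> \<le> NN M p (mult_op u (h n))" unfolding NN_def
    proof (rule integral_mono)
      show "integrable M (\<lambda>x. c powr p * norm (h n x) powr p)" using hint by auto
      show "integrable M (\<lambda>x. norm (mult_op u (h n) x) powr p)" using uhLp by (simp add: Lp_def)
      fix x assume x: "x \<in> space M"
      show "c powr p * norm (h n x) powr p \<le> norm (mult_op u (h n) x) powr p"
      proof (cases "x \<in> P (r n) \<or> x \<in> P (r (Suc n))")
        case True
        hence "c < norm (u x)" using P(2) B(2) by blast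
        hence "c powr p \<le> norm (u x) powr p" using c p by (intro powr_mono2) auto
        hence "c powr p * norm (h n x) powr p \<le> norm (u x) powr p * norm (h n x) powr p"
          by (intro mult_right_mono) auto
        thus ?thesis by (simp add: mult_op_def norm_mult powr_mult)
      next
        case False
        hence "h n x = 0" by (auto simp: h_def f_def)
        thus ?thesis using p by (simp add: mult_op_def)
      qed
    qed
    finally show ?thesis .
  qed
  have KhLp: "K (h n) \<in> Lp M p" for n using KL[OF hLp] .
  have NKh: "NN M p (K (h n)) \<le> 2 powr p * (e n + e (Suc n))" for n
  proof -
    have ae: "AE y in M. K (h n) y = (-1) * K (f (r (Suc n))) y + K (f (r n)) y"
      unfolding h_def by (rule Klin[OF fLp fLp])
    have "AE y in M. norm (K (h n) y) \<le> norm (K (f (r n)) y - g y) + norm (K (f (r (Suc n))) y - g y)"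
      using ae
    proof (rule eventually_mono)
      fix y assume "K (h n) y = (-1) * K (f (r (Suc n))) y + K (f (r n)) y"
      hence "K (h n) y = (K (f (r n)) y - g y) - (K (f (r (Suc n))) y - g y)" by simp
      thus "norm (K (h n) y) \<le> norm (K (f (r n)) y - g y) + norm (K (f (r (Suc n))) y - g y)"
        by (metis norm_triangle_ineq4)
    qed
    from Lp_bound2(2)[OF dLp dLp _ p this] KhLp show ?thesis by (simp add: Lp_def e_def)
  qed
  have Kh0: "(\<lambda>n. NN M p (K (h n))) \<longlonglongrightarrow> 0"
  proof (rule tendsto_sandwich[of "\<lambda>n. 0" _ _ "\<lambda>n. 2 powr p * (e n + e (Suc n))"])
    show "\<forall>\<^sub>F n in sequentially. 0 \<le> NN M p (K (h n))" by (simp add: NN_nonneg)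
    show "\<forall>\<^sub>F n in sequentially. NN M p (K (h n)) \<le> 2 powr p * (e n + e (Suc n))" using NKh by simp
    have "(\<lambda>n. e (Suc n)) \<longlonglongrightarrow> 0" using e0 by (rule LIMSEQ_Suc)
    hence "(\<lambda>n. e n + e (Suc n)) \<longlonglongrightarrow> 0 + 0" using e0 by (intro tendsto_add)
    thus "(\<lambda>n. 2 powr p * (e n + e (Suc n))) \<longlonglongrightarrow> 0" using tendsto_mult_right_zero by fastforce
  qed auto
  have ThLp: "(\<lambda>x. mult_op u (h n) x + K (h n) x) \<in> Lp M p" for n
  proof -
    have m1: "mult_op u (h n) \<in> borel_measurable M" "K (h n) \<in> borel_measurable M"
      using uhLp[of n] KhLp[of n] by (auto simp: Lp_def)
    have m: "(\<lambda>x. mult_op u (h n) x + K (h n) x) \<in> borel_measurable M" using m1 by measurable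
    show ?thesis by (rule Lp_bound2(1)[OF uhLp[of n] KhLp[of n] m p]) (simp add: norm_triangle_ineq)
  qed
  have lowb: "(1-d) powr p * (c powr p - d powr (-p) * NN M p (K (h n)))
      \<le> NN M p (\<lambda>x. mult_op u (h n) x + K (h n) x)" for n
  proof -
    have i1: "integrable M (\<lambda>x. norm (mult_op u (h n) x + K (h n) x) powr p)" using ThLp by (simp add: Lp_def)
    have i2: "integrable M (\<lambda>x. norm (K (h n) x) powr p)" using KhLp by (simp add: Lp_def)
    have "NN M p (mult_op u (h n)) \<le> (\<integral>x. (1-d) powr (-p) * norm (mult_op u (h n) x + K (h n) x) powr p
        + d powr (-p) * norm (K (h n) x) powr p \<partial>M)" unfolding NN_def
    proof (rule integral_mono')
      show "integrable M (\<lambda>x. (1-d) powr (-p) * norm (mult_op u (h n) x + K (h n) x) powr p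
        + d powr (-p) * norm (K (h n) x) powr p)" using i1 i2 by auto
      fix x
      have "norm (mult_op u (h n) x) \<le> norm (mult_op u (h n) x + K (h n) x) + norm (K (h n) x)"
        by (metis add_diff_cancel norm_triangle_ineq4)
      thus "norm (mult_op u (h n) x) powr p \<le> (1-d) powr (-p) * norm (mult_op u (h n) x + K (h n) x) powr p
        + d powr (-p) * norm (K (h n) x) powr p"
        using d p by (intro pw_rev) auto
      show "0 \<le> (1-d) powr (-p) * norm (mult_op u (h n) x + K (h n) x) powr p
        + d powr (-p) * norm (K (h n) x) powr p" by simp
    qed
    also have "\<dots> = (1-d) powr (-p) * NN M p (\<lambda>x. mult_op u (h n) x + K (h n) x) + d powr (-p) * NN M p (K (h n))"
      unfolding NN_def using i1 i2 by simp
    finally have "c powr p - d powr (-p) * NN M p (K (h n)) \<le> (1-d) powr (-p) * NN M p (\<lambda>x. mult_op u (h n) x + K (h n) x)"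
      using Nuh[of n] by simp
    hence "(1-d) powr p * (c powr p - d powr (-p) * NN M p (K (h n)))
        \<le> (1-d) powr p * ((1-d) powr (-p) * NN M p (\<lambda>x. mult_op u (h n) x + K (h n) x))"
      by (intro mult_left_mono) auto
    also have "\<dots> = ((1-d) powr p * (1-d) powr (-p)) * NN M p (\<lambda>x. mult_op u (h n) x + K (h n) x)"
      by (simp only: mult.assoc)
    also have "(1-d) powr p * (1-d) powr (-p) = 1"
      using d by (simp add: powr_add[symmetric])
    also have "1 * NN M p (\<lambda>x. mult_op u (h n) x + K (h n) x) = NN M p (\<lambda>x. mult_op u (h n) x + K (h n) x)" by simp
    finally show ?thesis .
  qed
  have lim2: "(\<lambda>n. (1-d) powr p * (c powr p - d powr (-p) * NN M p (K (h n)))) \<longlonglongrightarrow> (1-d) powr p * (c powr p - d powr (-p) * 0)"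
    by (intro tendsto_intros Kh0)
  have "t powr p < ((1-d) * c) powr p" using d t0 p by (intro powr_less_mono2) auto
  hence "t powr p < (1-d) powr p * (c powr p - d powr (-p) * 0)" using d c by (simp add: powr_mult)
  from order_tendstoD(1)[OF lim2 this] obtain N where
    N: "\<And>n. N \<le> n \<Longrightarrow> t powr p < (1-d) powr p * (c powr p - d powr (-p) * NN M p (K (h n)))"
    unfolding eventually_sequentially by blast
  have "t powr p < NN M p (\<lambda>x. mult_op u (h N) x + K (h N) x)" using N[of N] lowb[of N] by simp
  hence "(t powr p) powr (1/p) < NN M p (\<lambda>x. mult_op u (h N) x + K (h N) x) powr (1/p)"
    using p t0 by (intro powr_less_mono2) auto
  hence "t < Lp_norm M p (\<lambda>x. mult_op u (h N) x + K (h N) x)"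
    using p t0 by (simp add: Lp_norm_NN powr_powr)
  also have "\<dots> \<le> op_norm M p (\<lambda>f x. mult_op u f x + K f x)"
    unfolding op_norm_def
  proof (rule cSup_upper[OF _ bdd])
    have "Lp_norm M p (h N) \<le> 1" using hN[of N] by (simp add: Lp_norm_NN)
    thus "Lp_norm M p (\<lambda>x. mult_op u (h N) x + K (h N) x)
      \<in> (\<lambda>f. Lp_norm M p (\<lambda>x. mult_op u f x + K f x)) ` {f \<in> Lp M p. Lp_norm M p f \<le> 1}"
      using hLp[of N] by (intro image_eqI[where x="h N"]) auto
  qed
  finally show ?thesis by simp
qed


lemma lower_bound:
  fixes u :: "'a \<Rightarrow> 'b::{real_normed_field,second_countable_topology}"
  assumes sf: "sigma_finite_measure M" and dif: "diffuse M" and p1: "1 \<le> p"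
    and uL: "u \<in> Linf M" and Kc: "compact_Lp_op M p K"
  shows "Linf_norm M u \<le> op_norm M p (\<lambda>f x. mult_op u f x + K f x)"
proof (rule ccontr)
  assume "\<not> ?thesis"
  hence lt: "op_norm M p (\<lambda>f x. mult_op u f x + K f x) < Linf_norm M u" by simp
  have p: "0 < p" using p1 by simp
  have Kop: "Lp_operator M p K" using Kc by (simp add: compact_Lp_op_def)
  have bdd: "bdd_above ((\<lambda>f. Lp_norm M p (\<lambda>x. mult_op u f x + K f x)) ` {f\<in>Lp M p. Lp_norm M p f \<le> 1})"
    by (rule op_bdd[OF uL Kop p1])
  have "0 \<le> Lp_norm M p (\<lambda>x. mult_op u (\<lambda>x. 0) x + K (\<lambda>x. 0) x)" by (rule Lp_norm_nonneg)
  also have "\<dots> \<le> op_norm M p (\<lambda>f x. mult_op u f x + K f x)"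
    unfolding op_norm_def
    by (rule cSup_upper[OF _ bdd]) (intro image_eqI[where x="\<lambda>x. 0"], auto simp: Lp_zero[OF p])
  finally have S0: "0 \<le> op_norm M p (\<lambda>f x. mult_op u f x + K f x)" .
  define t where "t = (op_norm M p (\<lambda>f x. mult_op u f x + K f x) + Linf_norm M u) / 2"
  have "0 < t" "t < Linf_norm M u" "op_norm M p (\<lambda>f x. mult_op u f x + K f x) < t"
    using lt S0 by (auto simp: t_def)
  with key_lower[OF sf dif p1 uL Kc \<open>0 < t\<close> \<open>t < Linf_norm M u\<close>] show False by simp
qed

lemma zero_compact:
  assumes "0 < p"
  shows "compact_Lp_op M p (\<lambda>f x. (0::'b::{real_normed_field,second_countable_topology}))"
  unfolding compact_Lp_op_def Lp_operator_def
  using assms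
  apply (intro conjI ballI allI impI)
     apply (simp_all add: Lp_zero)
   apply (rule exI[of _ 0], simp)
  apply (rule conjI)
   apply (rule exI[of _ "\<lambda>n. n"], simp add: strict_mono_def)
  apply (rule exI[of _ "\<lambda>x. 0"])
  apply (simp add: Lp_zero)
  done

lemma upper_bound:
  fixes u :: "'a \<Rightarrow> 'b::{real_normed_field,second_countable_topology}"
  assumes p1: "1 \<le> p" and uL: "u \<in> Linf M"
  shows "op_norm M p (mult_op u) \<le> Linf_norm M u"
  unfolding op_norm_def
proof (rule cSup_least)
  have p: "0 < p" using p1 by simp
  show "(\<lambda>f. Lp_norm M p (mult_op u f)) ` {f \<in> Lp M p. Lp_norm M p f \<le> 1} \<noteq> {}"
  proof -
    have "(\<lambda>x. 0::'b) \<in> {f \<in> Lp M p. Lp_norm M p f \<le> 1}" by (simp add: Lp_zero[OF p])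
    thus ?thesis by blast
  qed
  fix y assume "y \<in> (\<lambda>f. Lp_norm M p (mult_op u f)) ` {f \<in> Lp M p. Lp_norm M p f \<le> 1}"
  then obtain f where f: "f \<in> Lp M p" "Lp_norm M p f \<le> 1" and y: "y = Lp_norm M p (mult_op u f)" by auto
  have L: "0 \<le> Linf_norm M u" by (rule Linf_nonneg[OF uL])
  have Nf: "NN M p f \<le> 1" using NN_Lp_norm[OF p, of M f] f Lp_norm_nonneg[of M p f] p
      powr_mono2[of p "Lp_norm M p f" 1] by simp
  have "NN M p (mult_op u f) \<le> Linf_norm M u powr p * NN M p f" by (rule Lp_mult(2)[OF uL f(1) p])
  also have "\<dots> \<le> Linf_norm M u powr p * 1" using Nf by (intro mult_left_mono) auto
  finally have "NN M p (mult_op u f) powr (1/p) \<le> (Linf_norm M u powr p) powr (1/p)"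
    using p by (intro powr_mono2) (auto simp: NN_nonneg)
  also have "\<dots> = Linf_norm M u" using L p by (simp add: powr_powr)
  finally show "y \<le> Linf_norm M u" using y by (simp add: Lp_norm_NN)
qed

theorem theorem3p2:
  fixes M :: "'a measure" and p :: real and u :: "'a \<Rightarrow> 'b::{real_normed_field,second_countable_topology}"
  assumes "sigma_finite_measure M" and "diffuse M"
    and "1 \<le> p"
    and "u \<in> Linf M"
  shows "(\<forall>K. compact_Lp_op M p K \<longrightarrow>
            op_norm M p (\<lambda>f x. mult_op u f x + K f x) \<ge> op_norm M p (mult_op u))
       \<and> op_norm M p (mult_op u) = Linf_norm M u
       \<and> ess_norm_mult M p u = Linf_norm M u"
proof -
  have p: "0 < p" using assms by simp
  have zc: "compact_Lp_op M p (\<lambda>f x. (0::'b))" by (rule zero_compact[OF p])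
  have eq0: "(\<lambda>f x. mult_op u f x + (\<lambda>f x. (0::'b)) f x) = mult_op u" by (intro ext) simp
  have eqL: "op_norm M p (mult_op u) = Linf_norm M u"
    using lower_bound[OF assms zc] upper_bound[OF assms(3,4)] eq0 by simp
  have low: "\<And>K. compact_Lp_op M p K \<Longrightarrow> Linf_norm M u \<le> op_norm M p (\<lambda>f x. mult_op u f x + K f x)"
    by (rule lower_bound[OF assms])
  have ess: "ess_norm_mult M p u = Linf_norm M u"
    unfolding ess_norm_mult_def
  proof (rule cInf_eq_minimum)
    show "Linf_norm M u \<in> (\<lambda>K. op_norm M p (\<lambda>f x. mult_op u f x + K f x)) ` {K. compact_Lp_op M p K}"
      using zc eq0 eqL by (intro image_eqI[where x="\<lambda>f x. 0"]) auto
  qed (use low in auto)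
  show ?thesis using low eqL ess by auto
qed

end
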